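(* Let $A \subset \mathbb{Z}^d$ be a finite set such that $A - A$ generates $\mathbb{Z}^d$ additively and such that its convex hull $\Delta_A$ is a $d$-dimensional simplex. Denote by $v_1, \ldots, v_{d+1}$ the vertices of $\Delta_A$, and for each $i$ let \[ T_i(A) = \bigcup_{k \geq 0} k(A - v_i), \] where $A - v_i = \{a - v_i : a \in A\}$. Then for all integers $h \geq 0$ with $h \geq \mathrm{vol}(\Delta_A)\cdot (d+1)! - 2 - 2d$ we have \[ hA = \bigcap_{i=1}^{d+1} \big( h v_i + T_i(A) \big). \]
   Context: For a finite set $B \subset \mathbb{Z}^d$ and integer $k \geq 0$, $kB = \{b_1 + \cdots + b_k : b_i \in B\}$, with $0B = \{0\}$. $\mathrm{vol}(\Delta_A)$ is the $d$-dimensional Lebesgue volume of the convex hull of $A$. For a set $S$ and vector $x$, $x + S = \{x + s : s \in S\}$. *)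

theory Defs
  imports "HOL-Analysis.Analysis"
begin

fun sumset :: "nat \<Rightarrow> 'a::monoid_add set \<Rightarrow> 'a set" where
  "sumset 0 B = {0}"
| "sumset (Suc k) B = {x + b | x b. x \<in> sumset k B \<and> b \<in> B}"

definition int_lattice :: "(real ^ 'n) set" where
  "int_lattice = {x. \<forall>i. x $ i \<in> \<int>}"

definition int_span :: "'a::real_vector set \<Rightarrow> 'a set" where
  "int_span S = {\<Sum>s\<in>F. of_int (c s) *\<^sub>R s | F c. finite F \<and> F \<subseteq> S}"

definition T_cone :: "'a::ab_group_add set \<Rightarrow> 'a \<Rightarrow> 'a set" where
  "T_cone A v = (\<Union>k. sumset k ((\<lambda>a. a - v) ` A))"

end

theory Submission
  imports Defs
begin
typedef 'a wo = "UNIV :: 'a set" by auto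
definition rk :: "'a::finite \<Rightarrow> nat" where "rk = (SOME f. inj f)"
lemma inj_rk: "inj (rk :: 'a::finite \<Rightarrow> nat)"
proof -
  obtain f :: "'a \<Rightarrow> nat" and n where "inj_on f UNIV"
    using finite_imp_inj_to_nat_seg[OF finite[of "UNIV::'a set"]] by blast
  then have "\<exists>f::'a \<Rightarrow> nat. inj f" by blast
  then show ?thesis unfolding rk_def by (rule someI_ex)
qed
lemma rk_eq: "rk (Rep_wo (x::'a::finite wo)) = rk (Rep_wo y) \<Longrightarrow> x = y"
  using inj_rk[where 'a='a] by (simp add: inj_eq Rep_wo_inject)
instantiation wo :: (finite) finite begin
instance proof
  have "(UNIV :: 'a wo set) = Abs_wo ` UNIV" by (metis Abs_wo_cases surj_def)
  then show "finite (UNIV :: 'a wo set)" by (metis finite finite_imageI)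
qed
end
instantiation wo :: (finite) linorder begin
definition "less_eq_wo (x::'a wo) (y::'a wo) \<longleftrightarrow> rk (Rep_wo x) \<le> rk (Rep_wo y)"
definition "less_wo (x::'a wo) (y::'a wo) \<longleftrightarrow> rk (Rep_wo x) < rk (Rep_wo y)"
instance proof
  fix x y :: "'a wo"
  show "x \<le> y \<or> y \<le> x" unfolding less_eq_wo_def by auto
  show "x \<le> y \<Longrightarrow> y \<le> x \<Longrightarrow> x = y" unfolding less_eq_wo_def
    using rk_eq by simp
qed (auto simp: less_eq_wo_def less_wo_def)
end
instance wo :: (finite) wellorder
proof
  fix P :: "'a wo \<Rightarrow> bool" and a
  assume H: "\<And>x. (\<And>y. y < x \<Longrightarrow> P y) \<Longrightarrow> P x"
  have "\<forall>x. rk (Rep_wo x) = n \<longrightarrow> P x" for n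
  proof (induction n rule: less_induct)
    case (less n) then show ?case using H unfolding less_wo_def by blast
  qed
  then show "P a" by blast
qed

definition tau :: "real^'n::finite \<Rightarrow> real^('n wo)" where "tau x = (\<chi> j. x $ Rep_wo j)"
definition taui :: "real^('n::finite wo) \<Rightarrow> real^'n" where "taui y = (\<chi> i. y $ Abs_wo i)"

lemma taui_tau[simp]: "taui (tau x) = x" by (simp add: tau_def taui_def Abs_wo_inverse vec_eq_iff)
lemma tau_taui[simp]: "tau (taui y) = y" by (simp add: tau_def taui_def Rep_wo_inverse vec_eq_iff)
lemma linear_tau: "linear tau" by (auto simp: linear_iff tau_def vec_eq_iff)
lemma linear_taui: "linear taui" by (auto simp: linear_iff taui_def vec_eq_iff)

lemma all_Rep: "(\<forall>i. P i) \<longleftrightarrow> (\<forall>j. P (Rep_wo j))"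
proof
  assume "\<forall>j. P (Rep_wo j)"
  then show "\<forall>i. P i" by (metis Abs_wo_inverse UNIV_I)
qed simp

lemma prod_Basis_cart: "(\<Prod>b\<in>(Basis::(real^'k::finite) set). x \<bullet> b) = (\<Prod>i\<in>UNIV. x $ i)"
proof -
  have "(Basis::(real^'k) set) = (\<lambda>i. axis i 1) ` UNIV" by (auto simp: Basis_vec_def)
  note B = this
  have I: "inj (\<lambda>i::'k. axis i (1::real))" by (auto simp: inj_def axis_eq_axis)
  have "prod ((\<bullet>) x) (Basis::(real^'k) set) = prod ((\<bullet>) x) ((\<lambda>i. axis i 1) ` UNIV)" by (simp only: B)
  also have "\<dots> = (\<Prod>i\<in>UNIV. x \<bullet> axis i 1)" by (simp add: prod.reindex[OF I])
  finally show ?thesis by (simp add: cart_eq_inner_axis)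
qed

lemma lborel_tau: "lborel = distr lborel borel (taui :: real^('n::finite wo) \<Rightarrow> real^'n)"
proof (rule lborel_eqI)
  have meas: "taui \<in> borel_measurable (borel :: (real^('n wo)) measure)"
    using linear_taui by (intro borel_measurable_continuous_onI linear_continuous_on, simp add: linear_conv_bounded_linear) 
  fix l u :: "real^'n" assume le: "\<And>b. b \<in> Basis \<Longrightarrow> l \<bullet> b \<le> u \<bullet> b"
  have le': "l $ i \<le> u $ i" for i
  proof -
    have "axis i (1::real) \<in> Basis" by simp
    then show ?thesis using le by (simp add: cart_eq_inner_axis)
  qed
  have pre: "taui -` box l u = box (tau l) (tau u)"
  proof -
    have "x \<in> taui -` box l u \<longleftrightarrow> x \<in> box (tau l) (tau u)" for x
    proof -
      have "x \<in> taui -` box l u \<longleftrightarrow> (\<forall>i. l $ i < x $ Abs_wo i \<and> x $ Abs_wo i < u $ i)"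
        by (simp add: mem_box_cart taui_def)
      also have "\<dots> \<longleftrightarrow> (\<forall>j. l $ Rep_wo j < x $ Abs_wo (Rep_wo j) \<and> x $ Abs_wo (Rep_wo j) < u $ Rep_wo j)"
        by (rule all_Rep)
      also have "\<dots> \<longleftrightarrow> x \<in> box (tau l) (tau u)"
        by (simp add: mem_box_cart tau_def Rep_wo_inverse)
      finally show ?thesis .
    qed
    then show ?thesis by blast
  qed
  have "emeasure (distr lborel borel taui) (box l u) = emeasure lborel (box (tau l) (tau u))"
    using meas by (simp add: emeasure_distr pre)
  also have "\<dots> = (\<Prod>b\<in>Basis. (tau u - tau l) \<bullet> b)"
  proof (rule emeasure_lborel_box)
    fix b :: "real^('n wo)" assume "b \<in> Basis"
    then obtain j where "b = axis j 1" by (auto simp: Basis_vec_def)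
    then show "tau l \<bullet> b \<le> tau u \<bullet> b" using le' by (simp add: cart_eq_inner_axis[symmetric] tau_def)
  qed
  also have "\<dots> = (\<Prod>j\<in>UNIV. (tau u - tau l) $ j)" by (simp only: prod_Basis_cart)
  also have "\<dots> = (\<Prod>i\<in>UNIV. (u - l) $ i)"
  proof -
    have "(\<Prod>j\<in>UNIV. (tau u - tau l) $ j) = (\<Prod>j\<in>UNIV. (u - l) $ (Rep_wo j))" by (simp add: tau_def)
    also have "\<dots> = (\<Prod>i\<in>Rep_wo ` UNIV. (u - l) $ i)"
      by (subst prod.reindex) (auto simp: inj_def Rep_wo_inject)
    also have "Rep_wo ` UNIV = (UNIV :: 'n set)" using type_definition.Rep_range[OF type_definition_wo] by simp
    finally show ?thesis by simp
  qed
  finally show "emeasure (distr lborel borel taui) (box l u) = (\<Prod>b\<in>Basis. (u - l) \<bullet> b)"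
    by (simp add: prod_Basis_cart)
qed simp

lemma measure_tau: 
  fixes S :: "(real^'n::finite) set" assumes "S \<in> sets borel"
  shows "measure lebesgue S = measure lebesgue (tau ` S)"
proof -
  have meas: "taui \<in> borel_measurable (borel :: (real^('n wo)) measure)"
    using linear_taui by (intro borel_measurable_continuous_onI linear_continuous_on, simp add: linear_conv_bounded_linear) 
  have pre: "taui -` S = tau ` S" by (auto simp: image_iff) (metis tau_taui)
  have tb: "tau ` S \<in> sets borel" using measurable_sets_borel[OF meas assms] pre by simp
  have "measure lebesgue S = measure lborel S" using assms by simp
  also have "\<dots> = measure (distr lborel borel (taui :: real^('n wo) \<Rightarrow> _)) S"
    using lborel_tau[where 'n='n] by simp
  also have "\<dots> = measure lborel (tau ` S)" using meas assms by (simp add: measure_distr pre)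
  also have "\<dots> = measure lebesgue (tau ` S)" using tb by simp
  finally show ?thesis .
qed

lemma lin_image_scale:
  fixes F :: "real^'n::finite \<Rightarrow> real^'n" assumes F: "linear F"
  shows "\<exists>\<kappa>. \<forall>S. compact S \<longrightarrow> measure lebesgue (F ` S) = \<kappa> * measure lebesgue S"
proof -
  define G where "G = tau \<circ> F \<circ> taui"
  have lG: "linear G" unfolding G_def using F linear_tau linear_taui by (intro linear_compose)
  have "measure lebesgue (F ` S) = \<bar>det (matrix G)\<bar> * measure lebesgue S" if S: "compact S" for S
  proof -
    have cF: "compact (F ` S)" using S F by (intro compact_continuous_image linear_continuous_on, simp_all add: linear_conv_bounded_linear)
    have ct: "compact (tau ` S)" using S linear_tau by (intro compact_continuous_image linear_continuous_on, simp_all add: linear_conv_bounded_linear)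
    have eq: "tau ` F ` S = G ` tau ` S" by (auto simp: G_def image_comp)
    have "measure lebesgue (F ` S) = measure lebesgue (tau ` F ` S)"
      using cF by (intro measure_tau) (simp add: compact_imp_closed borel_closed)
    also have "\<dots> = \<bar>det (matrix G)\<bar> * measure lebesgue (tau ` S)"
      unfolding eq using lG ct by (intro measure_linear_image lmeasurable_compact)
    also have "measure lebesgue (tau ` S) = measure lebesgue S"
      using S by (intro measure_tau[symmetric]) (simp add: compact_imp_closed borel_closed)
    finally show ?thesis .
  qed
  then show ?thesis by blast
qed

lemma sumset_SucI: "x \<in> sumset k B \<Longrightarrow> b \<in> B \<Longrightarrow> x + b \<in> sumset (Suc k) B"
  by auto

lemma sumset_add:
  fixes B :: "'a::comm_monoid_add set"
  shows "x \<in> sumset m B \<Longrightarrow> y \<in> sumset n B \<Longrightarrow> x + y \<in> sumset (m + n) B"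
proof (induction n arbitrary: y)
  case 0 then show ?case by simp
next
  case (Suc n)
  then obtain z b where "y = z + b" "z \<in> sumset n B" "b \<in> B" by auto
  then have "x + z \<in> sumset (m + n) B" using Suc by blast
  then have "(x + z) + b \<in> sumset (Suc (m + n)) B" using \<open>b \<in> B\<close> by (rule sumset_SucI)
  then show ?case using \<open>y = z + b\<close> by (simp add: add.assoc)
qed

lemma sumset_block:
  fixes B :: "'a::comm_monoid_add set"
  shows "(\<And>i. m \<le> i \<Longrightarrow> i < m + n \<Longrightarrow> a i \<in> B) \<Longrightarrow> (\<Sum>i=m..<m+n. a i) \<in> sumset n B"
proof (induction n)
  case 0 then show ?case by simp
next
  case (Suc n)
  have "(\<Sum>i=m..<m+Suc n. a i) = (\<Sum>i=m..<m+n. a i) + a (m+n)" by simp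
  moreover have "(\<Sum>i=m..<m+n. a i) \<in> sumset n B" using Suc by simp
  moreover have "a (m+n) \<in> B" using Suc by simp
  ultimately show ?case by auto
qed

lemma sumset_seq:
  fixes B :: "'a::comm_monoid_add set"
  shows "y \<in> sumset k B \<Longrightarrow> \<exists>a. (\<forall>i<k. a i \<in> B) \<and> y = (\<Sum>i<k. a i)"
proof (induction k arbitrary: y)
  case 0 then show ?case by simp
next
  case (Suc k)
  then obtain z b where zb: "y = z + b" "z \<in> sumset k B" "b \<in> B" by auto
  then obtain a where a: "\<forall>i<k. a i \<in> B" "z = (\<Sum>i<k. a i)" using Suc by blast
  define a' where "a' = a(k := b)"
  have "\<forall>i<Suc k. a' i \<in> B" using a zb by (auto simp: a'_def less_Suc_eq)
  moreover have "y = (\<Sum>i<Suc k. a' i)" using a zb by (simp add: a'_def)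
  ultimately show ?case by blast
qed

lemma sumset_mono_zero:
  fixes B :: "'a::comm_monoid_add set"
  shows "0 \<in> B \<Longrightarrow> x \<in> sumset k B \<Longrightarrow> k \<le> m \<Longrightarrow> x \<in> sumset m B"
proof (induction m)
  case 0 then show ?case by simp
next
  case (Suc m)
  show ?case
  proof (cases "k = Suc m")
    case True then show ?thesis using Suc by simp
  next
    case False then have "x \<in> sumset m B" using Suc by simp
    then have "x + 0 \<in> sumset (Suc m) B" using Suc.prems(1) by (rule sumset_SucI)
    then show ?thesis by simp
  qed
qed

lemma sumset_scale:
  fixes c :: "'a::real_vector"
  shows "c \<in> B \<Longrightarrow> real m *\<^sub>R c \<in> sumset m B"
proof (induction m)
  case 0 then show ?case by simp
next
  case (Suc m)
  then have "real m *\<^sub>R c + c \<in> sumset (Suc m) B" by auto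
  then show ?case by (simp add: algebra_simps)
qed

lemma sumset_lincomb:
  fixes C :: "'a::real_vector set"
  shows "finite C \<Longrightarrow> C \<subseteq> B \<Longrightarrow> (\<Sum>c\<in>C. real (n c) *\<^sub>R c) \<in> sumset (sum n C) B"
proof (induction C rule: finite_induct)
  case empty then show ?case by simp
next
  case (insert c C)
  then have "(\<Sum>c\<in>C. real (n c) *\<^sub>R c) + real (n c) *\<^sub>R c \<in> sumset (sum n C + n c) B"
    by (intro sumset_add sumset_scale) auto
  then show ?case using insert by (simp add: add.commute)
qed

lemma sumset_shift:
  fixes A :: "'a::real_vector set"
  shows "y \<in> sumset k ((\<lambda>a. a - v) ` A) \<longleftrightarrow> y + real k *\<^sub>R v \<in> sumset k A"
proof (induction k arbitrary: y)
  case 0 then show ?case by simp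
next
  case (Suc k)
  show ?case
  proof
    assume "y \<in> sumset (Suc k) ((\<lambda>a. a - v) ` A)"
    then obtain z a where "y = z + (a - v)" "z \<in> sumset k ((\<lambda>a. a - v) ` A)" "a \<in> A" by auto
    then have "z + real k *\<^sub>R v \<in> sumset k A" using Suc by blast
    then have "(z + real k *\<^sub>R v) + a \<in> sumset (Suc k) A" using \<open>a \<in> A\<close> by (rule sumset_SucI)
    moreover have "y + real (Suc k) *\<^sub>R v = (z + real k *\<^sub>R v) + a" using \<open>y = z + (a - v)\<close>
      by (simp add: algebra_simps)
    ultimately show "y + real (Suc k) *\<^sub>R v \<in> sumset (Suc k) A" by simp
  next
    assume "y + real (Suc k) *\<^sub>R v \<in> sumset (Suc k) A"
    then obtain z a where za: "y + real (Suc k) *\<^sub>R v = z + a" "z \<in> sumset k A" "a \<in> A" by auto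
    have "(z - real k *\<^sub>R v) + real k *\<^sub>R v \<in> sumset k A" using za by simp
    then have "z - real k *\<^sub>R v \<in> sumset k ((\<lambda>a. a - v) ` A)" using Suc by blast
    moreover have "y = (z - real k *\<^sub>R v) + (a - v)" using za(1) by (simp add: algebra_simps)
    moreover have "a - v \<in> (\<lambda>a. a - v) ` A" using za(3) by blast
    ultimately show "y \<in> sumset (Suc k) ((\<lambda>a. a - v) ` A)" using sumset_SucI by metis
  qed
qed

locale bary =
  fixes C :: "(real^'n::finite) set"
  assumes finC: "finite C" and indC: "\<not> affine_dependent C" and cardC: "card C = Suc CARD('n)"
begin

lemma C_ne: "C \<noteq> {}" using cardC by auto

lemma hull_UNIV: "affine hull C = UNIV"
proof -
  have "of_nat (card C) = aff_dim C + 1" using aff_dim_affine_independent[OF indC] by simp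
  then have "aff_dim C = int DIM(real^'n)" using cardC by simp
  then show ?thesis using aff_dim_eq_full by blast
qed

lemma uniq:
  assumes "sum u C = sum u' C" "(\<Sum>c\<in>C. u c *\<^sub>R c) = (\<Sum>c\<in>C. u' c *\<^sub>R c)" "c \<in> C"
  shows "u c = u' c"
proof (rule ccontr)
  assume ne: "u c \<noteq> u' c"
  have "sum (\<lambda>x. u x - u' x) C = 0" using assms by (simp add: sum_subtractf)
  moreover have "(\<Sum>x\<in>C. (u x - u' x) *\<^sub>R x) = 0" using assms by (simp add: scaleR_diff_left sum_subtractf)
  ultimately have "affine_dependent C"
    using ne assms(3) by (subst affine_dependent_explicit_finite[OF finC]) (intro exI[of _ "\<lambda>x. u x - u' x"], auto)
  then show False using indC by simp
qed

lemma exist: "\<exists>u. sum u C = k \<and> (\<Sum>c\<in>C. u c *\<^sub>R c) = x"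
proof -
  obtain v0 where v0: "v0 \<in> C" using C_ne by auto
  have "x - (k - 1) *\<^sub>R v0 \<in> affine hull C" using hull_UNIV by simp
  then obtain u where u: "sum u C = 1" "(\<Sum>c\<in>C. u c *\<^sub>R c) = x - (k - 1) *\<^sub>R v0"
    by (auto simp: affine_hull_finite[OF finC])
  define u' where "u' = (\<lambda>c. u c + (if c = v0 then k - 1 else 0))"
  have "sum u' C = k" using u v0 finC by (simp add: u'_def sum.distrib)
  moreover have "(\<Sum>c\<in>C. u' c *\<^sub>R c) = x" using u v0 finC
    by (simp add: u'_def scaleR_add_left sum.distrib if_distrib[of "\<lambda>t. t *\<^sub>R _"] cong: if_cong)
  ultimately show ?thesis by blast
qed

definition mu :: "real \<Rightarrow> real^'n \<Rightarrow> real^'n \<Rightarrow> real" where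
  "mu k x = (SOME u. sum u C = k \<and> (\<Sum>c\<in>C. u c *\<^sub>R c) = x)"

lemma mu: "sum (mu k x) C = k" "(\<Sum>c\<in>C. mu k x c *\<^sub>R c) = x"
  using someI_ex[OF exist[of k x]] unfolding mu_def by auto

lemma mu_unique: "sum u C = k \<Longrightarrow> (\<Sum>c\<in>C. u c *\<^sub>R c) = x \<Longrightarrow> c \<in> C \<Longrightarrow> mu k x c = u c"
  using uniq[of "mu k x" u c] mu by simp

lemma mu_add: "c \<in> C \<Longrightarrow> mu (k1 + k2) (x1 + x2) c = mu k1 x1 c + mu k2 x2 c"
  by (rule mu_unique) (simp_all add: sum.distrib scaleR_add_left mu)

lemma mu_diff: "c \<in> C \<Longrightarrow> mu (k1 - k2) (x1 - x2) c = mu k1 x1 c - mu k2 x2 c"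
  by (rule mu_unique) (simp_all add: sum_subtractf scaleR_diff_left mu)

lemma mu_zero: "c \<in> C \<Longrightarrow> mu 0 0 c = 0"
  by (rule mu_unique) simp_all

lemma mu_vertex: "v \<in> C \<Longrightarrow> c \<in> C \<Longrightarrow> mu 1 v c = (if c = v then 1 else 0)"
  by (rule mu_unique) (simp_all add: finC if_distrib[of "\<lambda>t. t *\<^sub>R _"] cong: if_cong)

lemma mu_scale_vertex: "v \<in> C \<Longrightarrow> c \<in> C \<Longrightarrow> mu m (m *\<^sub>R v) c = (if c = v then m else 0)"
  by (rule mu_unique) (simp_all add: finC if_distrib[of "\<lambda>t. t *\<^sub>R _"] cong: if_cong)

lemma mu_hull_nonneg: "a \<in> convex hull C \<Longrightarrow> c \<in> C \<Longrightarrow> mu 1 a c \<ge> 0"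
proof -
  assume a: "a \<in> convex hull C" and c: "c \<in> C"
  then obtain u where u: "\<forall>x\<in>C. 0 \<le> u x" "sum u C = 1" "(\<Sum>x\<in>C. u x *\<^sub>R x) = a"
    by (auto simp: convex_hull_finite[OF finC])
  then show ?thesis using mu_unique[OF u(2,3) c] c by simp
qed

lemma sumset_mu_nonneg:
  assumes A: "A \<subseteq> convex hull C"
  shows "y \<in> sumset k A \<Longrightarrow> c \<in> C \<Longrightarrow> mu (real k) y c \<ge> 0"
proof (induction k arbitrary: y)
  case 0 then show ?case by (simp add: mu_zero)
next
  case (Suc k)
  then obtain z a where za: "y = z + a" "z \<in> sumset k A" "a \<in> A" by auto
  have "mu (real (Suc k)) y c = mu (real k) z c + mu 1 a c"
    using mu_add[OF Suc(3), of "real k" 1 z a] za by (simp add: add.commute)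
  moreover have "mu 1 a c \<ge> 0" using A za(3) Suc(3) mu_hull_nonneg by blast
  ultimately show ?case using Suc za by simp
qed

lemma comp:
  assumes CA: "C \<subseteq> A" and r: "r \<in> sumset j A"
    and n: "\<And>c. c \<in> C \<Longrightarrow> mu (real k) y c - mu (real j) r c = real (n c)"
  shows "y \<in> sumset k A"
proof -
  have "real k - real j = sum (\<lambda>c. mu (real k) y c - mu (real j) r c) C"
    by (simp add: sum_subtractf mu)
  also have "\<dots> = real (sum n C)" using n by simp
  finally have k: "k = j + sum n C" by linarith
  have "y - r = (\<Sum>c\<in>C. (mu (real k) y c - mu (real j) r c) *\<^sub>R c)"
    by (simp add: scaleR_diff_left sum_subtractf mu)
  also have "\<dots> = (\<Sum>c\<in>C. real (n c) *\<^sub>R c)" using n by simp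
  finally have "y = r + (\<Sum>c\<in>C. real (n c) *\<^sub>R c)" by (simp add: algebra_simps)
  moreover have "(\<Sum>c\<in>C. real (n c) *\<^sub>R c) \<in> sumset (sum n C) A"
    using sumset_lincomb[OF finC CA] by simp
  ultimately show ?thesis using sumset_add[OF r] k by simp
qed

end

lemma int_lattice_add: "x \<in> int_lattice \<Longrightarrow> y \<in> int_lattice \<Longrightarrow> x + y \<in> int_lattice"
  by (auto simp: int_lattice_def)
lemma int_lattice_diff: "x \<in> int_lattice \<Longrightarrow> y \<in> int_lattice \<Longrightarrow> x - y \<in> int_lattice"
  by (auto simp: int_lattice_def)
lemma int_lattice_zero: "0 \<in> int_lattice"
  by (auto simp: int_lattice_def)
lemma int_lattice_scale: "r \<in> \<int> \<Longrightarrow> x \<in> int_lattice \<Longrightarrow> r *\<^sub>R x \<in> int_lattice"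
  by (auto simp: int_lattice_def)
lemma int_lattice_sum: "(\<And>i. i \<in> I \<Longrightarrow> x i \<in> int_lattice) \<Longrightarrow> sum x I \<in> int_lattice"
  by (induction I rule: infinite_finite_induct) (auto simp: int_lattice_zero int_lattice_add)
lemma int_lattice_sumset: "A \<subseteq> int_lattice \<Longrightarrow> y \<in> sumset k A \<Longrightarrow> y \<in> int_lattice"
  by (induction k arbitrary: y) (auto simp: int_lattice_zero int_lattice_add)

lemma int_small_zero:
  assumes "x \<in> int_lattice" "\<And>i. \<bar>x $ i\<bar> < 1" shows "x = 0"
proof -
  have "x $ i = 0" for i
  proof -
    obtain m where "x $ i = of_int m" using assms(1) by (auto simp: int_lattice_def elim: Ints_cases)
    then show ?thesis using assms(2)[of i] by simp
  qed
  then show ?thesis by (simp add: vec_eq_iff)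
qed

lemma countable_int_lattice: "countable (int_lattice :: (real^'n::finite) set)"
proof -
  have "int_lattice = range (\<lambda>k::'n \<Rightarrow> int. \<chi> i. (of_int (k i) :: real))"
  proof (rule set_eqI, rule iffI)
    fix x :: "real^'n" assume "x \<in> int_lattice"
    then have "\<forall>i. \<exists>m. x $ i = of_int m" by (auto simp: int_lattice_def elim!: Ints_cases)
    then obtain k where "\<forall>i. x $ i = of_int (k i)" by metis
    then show "x \<in> range (\<lambda>k::'n \<Rightarrow> int. \<chi> i. (of_int (k i) :: real))"
      by (auto simp: vec_eq_iff intro!: image_eqI[of _ _ k])
  qed (auto simp: int_lattice_def)
  moreover have "countable (UNIV :: ('n \<Rightarrow> int) set)" by (rule countableI_type)
  ultimately show ?thesis by (metis countable_image)
qed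

lemma One_cart: "(One :: real^'n::finite) $ i = 1"
  by (simp add: cart_eq_inner_axis inner_sum_left inner_Basis)

lemma One_cart': "(\<Sum>x\<in>(Basis::(real^'n::finite) set). x $ i) = 1"
  using One_cart[of i] by simp

definition Hbox :: "(real^'n::finite) set" where "Hbox = {s. \<forall>i. 0 \<le> s $ i \<and> s $ i < 1}"

lemma Hbox_borel: "Hbox \<in> sets borel"
  unfolding Hbox_def by measurable

lemma Hbox_diff_int:
  assumes "s \<in> Hbox" "s' \<in> Hbox" "s - s' \<in> int_lattice" shows "s = s'"
proof -
  have "\<bar>(s - s') $ i\<bar> < 1" for i
  proof -
    have "0 \<le> s $ i" "s $ i < 1" "0 \<le> s' $ i" "s' $ i < 1" using assms(1,2) by (auto simp: Hbox_def)
    then show ?thesis by (simp add: abs_less_iff)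
  qed
  then have "s - s' = 0" using int_small_zero[OF assms(3)] by blast
  then show ?thesis by simp
qed

lemma lattice_count:
  fixes f :: "real^'n::finite \<Rightarrow> real^'n"
  assumes lin: "linear f" and inj: "inj f" and fL: "\<And>k. k \<in> int_lattice \<Longrightarrow> f k \<in> int_lattice"
    and Q: "finite Q" "Q \<subseteq> int_lattice" "Q \<subseteq> f ` Hbox"
  shows "real (card Q) \<le> measure lebesgue (f ` cbox 0 One)"
proof -
  obtain g where g: "linear g" "\<And>x. g (f x) = x" "\<And>x. f (g x) = x"
    using linear_injective_isomorphism[OF lin inj] by auto
  have gc: "continuous_on UNIV g" using g(1) by (intro linear_continuous_on) (simp add: linear_conv_bounded_linear)
  have gm: "g \<in> borel_measurable borel" using gc by (rule borel_measurable_continuous_onI)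
  define Pho where "Pho = g -` Hbox"
  have Pho_b: "Pho \<in> sets borel" unfolding Pho_def using measurable_sets_borel[OF gm Hbox_borel] by simp
  define L where "L = f ` int_lattice"
  have cL: "countable L" unfolding L_def by (intro countable_image countable_int_lattice)
  have L_int: "l \<in> int_lattice" if "l \<in> L" for l using that fL by (auto simp: L_def)
  define B where "B = (\<lambda>q::real^'n. box q (q + One))"
  define X where "X = \<Union>(B ` Q)"
  have X_b: "X \<in> sets borel" unfolding X_def B_def using Q(1) by auto
  have B1: "emeasure lborel (B q) = 1" for q
    by (simp add: B_def emeasure_lborel_box_eq inner_simps)
  have disjB: "disjoint_family_on B Q"
  unfolding disjoint_family_on_def
  proof (intro ballI impI)
    fix q q' assume qq: "q \<in> Q" "q' \<in> Q" "q \<noteq> q'"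
    show "B q \<inter> B q' = {}"
    proof (rule ccontr)
      assume "B q \<inter> B q' \<noteq> {}"
      then obtain z where z: "z \<in> B q" "z \<in> B q'" by auto
      have "\<bar>(q - q') $ i\<bar> < 1" for i
      proof -
        have "q$i < z$i" "z$i < q$i+1" "q'$i < z$i" "z$i < q'$i + 1" using z by (auto simp: B_def mem_box_cart One_cart')
        then show ?thesis by (simp add: abs_less_iff)
      qed
      then have "q - q' = 0" using int_small_zero[OF int_lattice_diff] qq Q(2) by blast
      then show False using qq by simp
    qed
  qed
  have "emeasure lborel X = (\<integral>\<^sup>+q. emeasure lborel (B q) \<partial>count_space Q)"
    unfolding X_def using Q(1) disjB by (intro emeasure_UN_countable) (auto simp: B_def countable_finite)
  also have "\<dots> = real (card Q)" using Q(1) by (simp add: B1 nn_integral_count_space_finite ennreal_of_nat_eq_real_of_nat)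
  finally have mX: "emeasure lborel X = real (card Q)" .
  define Y where "Y = (\<lambda>l. X \<inter> {z. z - l \<in> Pho})"
  have Y_b: "Y l \<in> sets borel" for l
  proof -
    have "(\<lambda>z. z - l) \<in> borel_measurable borel" by measurable
    then have "(\<lambda>z. z - l) -` Pho \<in> sets borel" using measurable_sets_borel Pho_b by blast
    then show ?thesis unfolding Y_def using X_b by (auto simp: vimage_def)
  qed
  have XY: "X = \<Union>(Y ` L)"
  proof
    show "X \<subseteq> \<Union>(Y ` L)"
    proof
      fix z assume z: "z \<in> X"
      define k where "k = (\<chi> i. (of_int \<lfloor>g z $ i\<rfloor> :: real))"
      have k: "k \<in> int_lattice" by (simp add: k_def int_lattice_def)
      have "g (z - f k) = g z - k" using g by (simp add: linear_diff)
      also have "\<dots> \<in> Hbox" by (auto simp: Hbox_def k_def) linarith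
      finally have "z - f k \<in> Pho" by (simp add: Pho_def)
      then show "z \<in> \<Union>(Y ` L)" using z k by (auto simp: Y_def L_def)
    qed
  qed (auto simp: Y_def)
  have disjY: "disjoint_family_on Y L"
  unfolding disjoint_family_on_def
  proof (intro ballI impI)
    fix l l' assume ll: "l \<in> L" "l' \<in> L" "l \<noteq> l'"
    then obtain k k' where kk: "l = f k" "l' = f k'" "k \<in> int_lattice" "k' \<in> int_lattice" by (auto simp: L_def)
    show "Y l \<inter> Y l' = {}"
    proof (rule ccontr)
      assume "Y l \<inter> Y l' \<noteq> {}"
      then obtain z where "z - l \<in> Pho" "z - l' \<in> Pho" by (auto simp: Y_def)
      then have "g z - k \<in> Hbox" "g z - k' \<in> Hbox" using g kk by (auto simp: Pho_def linear_diff)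
      moreover have "(g z - k) - (g z - k') \<in> int_lattice" using kk by (simp add: int_lattice_diff)
      ultimately have "k = k'" using Hbox_diff_int by fastforce
      then show False using kk ll by simp
    qed
  qed
  have mXL: "emeasure lborel X = (\<integral>\<^sup>+l. emeasure lborel (Y l) \<partial>count_space L)"
    unfolding XY using cL disjY Y_b by (intro emeasure_UN_countable) auto
  define Z where "Z = (\<lambda>l. (+) l -` Y l)"
  have YZ: "emeasure lborel (Y l) = emeasure lborel (Z l)" for l
  proof -
    have "emeasure lborel (Y l) = emeasure (distr lborel borel ((+) l)) (Y l)"
      by (simp add: lborel_distr_plus)
    also have "\<dots> = emeasure lborel ((+) l -` Y l \<inter> space lborel)"
      using Y_b by (intro emeasure_distr) auto
    finally show ?thesis by (simp add: Z_def)
  qed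
  have Z_b: "Z l \<in> sets borel" for l
  proof -
    have "(+) l \<in> borel_measurable borel" by measurable
    then show ?thesis unfolding Z_def using measurable_sets_borel Y_b by blast
  qed
  have disjZ: "disjoint_family_on Z L"
  unfolding disjoint_family_on_def
  proof (intro ballI impI)
    fix l l' assume ll: "l \<in> L" "l' \<in> L" "l \<noteq> l'"
    then obtain k k' where kk: "l = f k" "l' = f k'" "k \<in> int_lattice" "k' \<in> int_lattice" by (auto simp: L_def)
    show "Z l \<inter> Z l' = {}"
    proof (rule ccontr)
      assume "Z l \<inter> Z l' \<noteq> {}"
      then obtain w q q' where w: "l + w \<in> B q" "l' + w \<in> B q'" "q \<in> Q" "q' \<in> Q" "w \<in> Pho"
        by (auto simp: Z_def Y_def X_def)
      have "\<bar>((l - q) - (l' - q')) $ i\<bar> < 1" for i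
      proof -
        have "q $ i < l $ i + w $ i" "l $ i + w $ i < q $ i + 1" "q' $ i < l' $ i + w $ i" "l' $ i + w $ i < q' $ i + 1"
          using w(1,2) by (auto simp: B_def mem_box_cart One_cart')
        then show ?thesis by (simp add: abs_less_iff)
      qed
      moreover have "(l - q) - (l' - q') \<in> int_lattice" using ll w Q(2) L_int
        by (intro int_lattice_diff) auto
      ultimately have "(l - q) - (l' - q') = 0" using int_small_zero by blast
      then have e: "q - q' = l - l'" by (simp add: algebra_simps)
      obtain s s' where ss: "q = f s" "q' = f s'" "s \<in> Hbox" "s' \<in> Hbox" using w(3,4) Q(3) by blast
      have "f (s - s') = f (k - k')" using e ss kk lin by (simp add: linear_diff)
      then have "s - s' = k - k'" using inj by (simp add: inj_eq)
      then have "s = s'" using Hbox_diff_int[OF ss(3,4)] kk by (simp add: int_lattice_diff)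
      then have "k = k'" using \<open>s - s' = k - k'\<close> by simp
      then show False using kk ll by simp
    qed
  qed
  have "(\<integral>\<^sup>+l. emeasure lborel (Y l) \<partial>count_space L) = (\<integral>\<^sup>+l. emeasure lborel (Z l) \<partial>count_space L)"
    by (simp add: YZ)
  also have "\<dots> = emeasure lborel (\<Union>(Z ` L))"
    using cL disjZ Z_b by (intro emeasure_UN_countable[symmetric]) auto
  also have "\<dots> \<le> emeasure lborel (f ` cbox 0 One)"
  proof (rule emeasure_mono)
    show "\<Union>(Z ` L) \<subseteq> f ` cbox 0 One"
    proof
      fix w assume "w \<in> \<Union>(Z ` L)"
      then have "g w \<in> Hbox" by (auto simp: Z_def Y_def Pho_def)
      then have "g w \<in> cbox 0 One" unfolding Hbox_def mem_box_cart One_cart' by (auto simp: mem_box_cart One_cart' less_imp_le)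
      then show "w \<in> f ` cbox 0 One" using g(3)[of w] by (metis image_eqI)
    qed
    have "compact (f ` cbox 0 One)" using lin
      by (intro compact_continuous_image linear_continuous_on) (simp_all add: linear_conv_bounded_linear)
    then show "f ` cbox 0 One \<in> sets lborel" by (simp add: compact_imp_closed borel_closed)
  qed
  finally have le: "ennreal (real (card Q)) \<le> emeasure lborel (f ` cbox 0 One)"
    using mX mXL by simp
  have cK: "compact (f ` cbox 0 One)" using lin
    by (intro compact_continuous_image linear_continuous_on) (simp_all add: linear_conv_bounded_linear)
  then have Kb: "f ` cbox 0 One \<in> sets borel" by (simp add: compact_imp_closed borel_closed)
  have "emeasure lborel (f ` cbox 0 One) = emeasure lebesgue (f ` cbox 0 One)" using Kb by simp
  also have "\<dots> = ennreal (measure lebesgue (f ` cbox 0 One))"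
    using lmeasurable_compact[OF cK] by (simp add: emeasure_eq_measure2)
  finally show ?thesis using le by simp
qed

context bary begin

lemma uniq0:
  assumes v0: "v0 \<in> C" and s: "(\<Sum>c\<in>C. u c *\<^sub>R (c - v0)) = 0" and c: "c \<in> C" "c \<noteq> v0"
  shows "u c = 0"
proof -
  define u' where "u' = (\<lambda>x. u x - (if x = v0 then sum u C else 0))"
  have "sum u' C = sum (\<lambda>x. 0) C" using v0 finC by (simp add: u'_def sum_subtractf)
  moreover have "(\<Sum>x\<in>C. u' x *\<^sub>R x) = (\<Sum>x\<in>C. 0 *\<^sub>R x)"
  proof -
    have "(\<Sum>x\<in>C. u' x *\<^sub>R x) = (\<Sum>x\<in>C. u x *\<^sub>R x) - sum u C *\<^sub>R v0"
      using v0 finC by (simp add: u'_def scaleR_diff_left sum_subtractf if_distrib[of "\<lambda>t. t *\<^sub>R _"] cong: if_cong)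
    also have "\<dots> = (\<Sum>c\<in>C. u c *\<^sub>R (c - v0))"
      by (simp add: scaleR_diff_right sum_subtractf scaleR_sum_left)
    finally show ?thesis using s by simp
  qed
  ultimately have "u' c = 0" using uniq[of u' "\<lambda>x. 0" c] c by simp
  then show ?thesis using c by (simp add: u'_def)
qed

lemma exists_f:
  assumes v0: "v0 \<in> C" and Cint: "C \<subseteq> int_lattice"
  shows "\<exists>f :: real^'n \<Rightarrow> real^'n. linear f \<and> inj f \<and> (\<forall>k\<in>int_lattice. f k \<in> int_lattice)
     \<and> (\<forall>t. (\<forall>c\<in>C. 0 \<le> t c \<and> t c < 1) \<longrightarrow> (\<Sum>c\<in>C. t c *\<^sub>R (c - v0)) \<in> f ` Hbox)
     \<and> measure lebesgue (f ` cbox 0 One) = fact CARD('n) * measure lebesgue (convex hull C)"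
proof -
  have "card (C - {v0}) = card (UNIV :: 'n set)" using cardC v0 finC by simp
  then obtain \<beta> where \<beta>: "bij_betw \<beta> (UNIV :: 'n set) (C - {v0})"
    using finite_same_card_bij[of "UNIV :: 'n set" "C - {v0}"] finC by (metis finite finite_Diff)
  define f where "f = (\<lambda>t::real^'n. \<Sum>i\<in>UNIV. t $ i *\<^sub>R (\<beta> i - v0))"
  have lin: "linear f" unfolding f_def
    by (auto simp: linear_iff sum.distrib scaleR_add_left scaleR_sum_right)
  have reidx: "(\<Sum>c\<in>C. t c *\<^sub>R (c - v0)) = f (\<chi> i. t (\<beta> i))" for t
  proof -
    have "(\<Sum>c\<in>C. t c *\<^sub>R (c - v0)) = (\<Sum>c\<in>C - {v0}. t c *\<^sub>R (c - v0))"
      using v0 finC by (simp add: sum.remove)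
    also have "\<dots> = (\<Sum>i\<in>UNIV. t (\<beta> i) *\<^sub>R (\<beta> i - v0))"
      using sum.reindex_bij_betw[OF \<beta>, of "\<lambda>c. t c *\<^sub>R (c - v0)"] by simp
    finally show ?thesis by (simp add: f_def)
  qed
  have inj: "inj f"
  proof -
    have "t = 0" if "f t = 0" for t
    proof -
      define u where "u = (\<lambda>c. if c = v0 then 0 else t $ (inv_into UNIV \<beta> c))"
      have ub: "u (\<beta> i) = t $ i" for i
      proof -
        have "\<beta> i \<in> C - {v0}" using \<beta> by (auto simp: bij_betw_def)
        moreover have "inv_into UNIV \<beta> (\<beta> i) = i" using \<beta> by (simp add: bij_betw_def inv_into_f_f)
        ultimately show ?thesis by (simp add: u_def)
      qed
      have "(\<chi> i. u (\<beta> i)) = t" by (simp add: ub vec_eq_iff)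
      then have "(\<Sum>c\<in>C. u c *\<^sub>R (c - v0)) = 0" using reidx[of u] that by simp
      then have "u c = 0" if "c \<in> C" "c \<noteq> v0" for c using uniq0[OF v0] that by blast
      moreover have "\<beta> i \<in> C" "\<beta> i \<noteq> v0" for i using \<beta> by (auto simp: bij_betw_def)
      ultimately show ?thesis by (simp add: vec_eq_iff flip: ub)
    qed
    then show ?thesis using lin by (simp add: linear_injective_0)
  qed
  have lat: "\<forall>k\<in>int_lattice. f k \<in> int_lattice"
  proof
    fix k :: "real^'n" assume k: "k \<in> int_lattice"
    have "\<beta> i \<in> C" for i using \<beta> by (auto simp: bij_betw_def)
    then show "f k \<in> int_lattice" unfolding f_def using k Cint v0
      by (intro int_lattice_sum int_lattice_scale int_lattice_diff) (auto simp: int_lattice_def)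
  qed
  have box: "\<forall>t. (\<forall>c\<in>C. 0 \<le> t c \<and> t c < 1) \<longrightarrow> (\<Sum>c\<in>C. t c *\<^sub>R (c - v0)) \<in> f ` Hbox"
  proof (intro allI impI)
    fix t :: "real^'n \<Rightarrow> real" assume t: "\<forall>c\<in>C. 0 \<le> t c \<and> t c < 1"
    have "\<beta> i \<in> C" for i using \<beta> by (auto simp: bij_betw_def)
    then have "(\<chi> i. t (\<beta> i)) \<in> Hbox" using t by (auto simp: Hbox_def)
    then show "(\<Sum>c\<in>C. t c *\<^sub>R (c - v0)) \<in> f ` Hbox" using reidx by auto
  qed
  obtain \<kappa> where \<kappa>: "\<And>S. compact S \<Longrightarrow> measure lebesgue (f ` S) = \<kappa> * measure lebesgue S"
    using lin_image_scale[OF lin] by blast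
  have m1: "measure lebesgue (cbox 0 (One :: real^'n)) = 1"
  proof -
    have "measure lebesgue (cbox 0 (One :: real^'n)) = measure lborel (cbox 0 (One :: real^'n))" by simp
    also have "\<dots> = 1" by (simp add: content_cbox_cart One_cart')
    finally show ?thesis .
  qed
  define std where "std = convex hull (insert 0 (Basis :: (real^'n) set))"
  have cstd: "compact std" unfolding std_def by (intro finite_imp_compact_convex_hull) auto
  have mstd: "measure lebesgue std = 1 / fact CARD('n)"
  proof -
    have "measure lebesgue std = measure lborel std" using cstd by (simp add: compact_imp_closed borel_closed)
    also have "\<dots> = 1 / fact CARD('n)" unfolding std_def by (simp add: content_std_simplex)
    finally show ?thesis .
  qed
  have fax: "f (axis i 1) = \<beta> i - v0" for i
    by (simp add: f_def axis_def if_distrib[of "\<lambda>t. t *\<^sub>R _"] cong: if_cong)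
  have "f ` std = convex hull (f ` insert 0 Basis)" unfolding std_def
    by (rule convex_hull_linear_image[OF lin])
  also have "f ` insert 0 Basis = (\<lambda>x. x - v0) ` C"
  proof -
    have "f ` Basis = (\<lambda>i. \<beta> i - v0) ` UNIV" by (auto simp: Basis_vec_def fax image_iff)
    also have "\<dots> = (\<lambda>x. x - v0) ` (C - {v0})"
    proof -
      have r: "\<beta> ` UNIV = C - {v0}" using \<beta> by (simp add: bij_betw_def)
      show ?thesis by (simp add: r[symmetric] image_image)
    qed
    finally show ?thesis using v0 lin by (auto simp: linear_0)
  qed
  also have "(\<lambda>x. x - v0) ` C = (+) (- v0) ` C" by (auto simp: image_iff)
  also have "convex hull ((+) (- v0) ` C) = (+) (- v0) ` (convex hull C)" by (rule convex_hull_translation)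
  finally have "measure lebesgue (f ` std) = measure lebesgue (convex hull C)"
    by (simp add: measure_translation_subtract)
  then have "measure lebesgue (convex hull C) = \<kappa> / fact CARD('n)" using \<kappa>[OF cstd] mstd by simp
  moreover have "measure lebesgue (f ` cbox 0 One) = \<kappa>" using \<kappa>[of "cbox 0 One"] m1 by simp
  ultimately have mm: "measure lebesgue (f ` cbox 0 One) = fact CARD('n) * measure lebesgue (convex hull C)" by simp
  show ?thesis
    apply (rule exI[of _ f])
    apply (intro conjI)
    using lin apply assumption
    using inj apply assumption
    using lat apply assumption
    using box apply assumption
    using mm apply assumption
    done
qed

end

lemma nonneg_int_nat: "(x::real) \<in> \<int> \<Longrightarrow> 0 \<le> x \<Longrightarrow> \<exists>n::nat. x = real n"
proof -
  assume x: "x \<in> \<int>" "0 \<le> x"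
  then obtain m where m: "x = of_int m" by (auto elim: Ints_cases)
  then have "0 \<le> m" using x by simp
  then have "x = real (nat m)" using m by simp
  then show ?thesis by blast
qed

locale sset = bary C for C :: "(real^'n::finite) set" +
  fixes v0 :: "real^'n" and A :: "(real^'n) set"
  assumes v0: "v0 \<in> C" and CA: "C \<subseteq> A" and AC: "A \<subseteq> convex hull C" and Aint: "A \<subseteq> int_lattice"
begin

definition q where "q k x = (\<Sum>c\<in>C. frac (mu k x c) *\<^sub>R (c - v0))"
definition Qset where "Qset = {q (real k) y | k y. y \<in> sumset k A}"
definition M where "M = fact CARD('n) * measure lebesgue (convex hull C)"

lemma Cint: "C \<subseteq> int_lattice" using CA Aint by auto

lemma q_lattice: assumes y: "y \<in> int_lattice" shows "q (real k) y \<in> int_lattice"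
proof -
  have "q (real k) y = (\<Sum>c\<in>C. mu (real k) y c *\<^sub>R (c - v0)) - (\<Sum>c\<in>C. of_int \<lfloor>mu (real k) y c\<rfloor> *\<^sub>R (c - v0))"
    by (simp add: q_def frac_def scaleR_diff_left sum_subtractf)
  also have "(\<Sum>c\<in>C. mu (real k) y c *\<^sub>R (c - v0)) = y - real k *\<^sub>R v0"
  proof -
    have "(\<Sum>c\<in>C. mu (real k) y c *\<^sub>R (c - v0)) = (\<Sum>c\<in>C. mu (real k) y c *\<^sub>R c) - (\<Sum>c\<in>C. mu (real k) y c) *\<^sub>R v0"
      by (simp add: scaleR_diff_right sum_subtractf scaleR_sum_left)
    then show ?thesis by (simp add: mu)
  qed
  finally have e: "q (real k) y = (y - real k *\<^sub>R v0) - (\<Sum>c\<in>C. of_int \<lfloor>mu (real k) y c\<rfloor> *\<^sub>R (c - v0))" .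
  have v0i: "v0 \<in> int_lattice" using v0 Cint by auto
  show ?thesis unfolding e using y v0i Cint
    by (intro int_lattice_diff int_lattice_sum int_lattice_scale) auto
qed

lemma frac_eq_diff_Ints: "frac a = frac b \<Longrightarrow> a - b \<in> \<int>"
proof -
  assume "frac a = frac b"
  then have "a - b = of_int (\<lfloor>a\<rfloor> - \<lfloor>b\<rfloor>)" by (simp add: frac_def algebra_simps)
  then show ?thesis by simp
qed

lemma q_eq:
  assumes e: "q (real k) y = q (real k') y'" and c: "c \<in> C"
  shows "mu (real k) y c - mu (real k') y' c \<in> \<int>"
proof -
  define t where "t = (\<lambda>c. frac (mu (real k) y c) - frac (mu (real k') y' c))"
  have "(\<Sum>c\<in>C. t c *\<^sub>R (c - v0)) = 0" using e by (simp add: q_def t_def scaleR_diff_left sum_subtractf)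
  then have t0: "t c = 0" if "c \<in> C" "c \<noteq> v0" for c using uniq0[OF v0] that by blast
  have ne: "mu (real k) y c - mu (real k') y' c \<in> \<int>" if "c \<in> C" "c \<noteq> v0" for c
    using t0[OF that] by (intro frac_eq_diff_Ints) (simp add: t_def)
  show ?thesis
  proof (cases "c = v0")
    case False then show ?thesis using ne c by blast
  next
    case True
    have s1: "mu (real k) y v0 = real k - (\<Sum>c\<in>C - {v0}. mu (real k) y c)"
      using mu(1)[of "real k" y] sum.remove[OF finC v0, of "mu (real k) y"] by simp
    have s2: "mu (real k') y' v0 = real k' - (\<Sum>c\<in>C - {v0}. mu (real k') y' c)"
      using mu(1)[of "real k'" y'] sum.remove[OF finC v0, of "mu (real k') y'"] by simp
    have "mu (real k) y v0 - mu (real k') y' v0 = (real k - real k') - (\<Sum>c\<in>C - {v0}. mu (real k) y c - mu (real k') y' c)"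
      using s1 s2 by (simp add: sum_subtractf)
    also have "\<dots> \<in> \<int>"
    proof -
      have S: "(\<Sum>c\<in>C - {v0}. mu (real k) y c - mu (real k') y' c) \<in> \<int>"
        by (rule Ints_sum) (use ne in auto)
      show ?thesis by (rule Ints_diff[OF Ints_diff[OF Ints_of_nat Ints_of_nat] S])
    qed
    finally show ?thesis using True by simp
  qed
qed

lemma Qset_fin: "finite Qset \<and> real (card Qset) \<le> M"
proof -
  obtain f :: "real^'n \<Rightarrow> real^'n" where f: "linear f" "inj f" "\<forall>k\<in>int_lattice. f k \<in> int_lattice"
    "\<forall>t. (\<forall>c\<in>C. 0 \<le> t c \<and> t c < 1) \<longrightarrow> (\<Sum>c\<in>C. t c *\<^sub>R (c - v0)) \<in> f ` Hbox"
    "measure lebesgue (f ` cbox 0 One) = M"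
    using exists_f[OF v0 Cint] unfolding M_def by blast
  have sub1: "Qset \<subseteq> int_lattice"
    using q_lattice int_lattice_sumset[OF Aint] by (auto simp: Qset_def)
  have sub2: "Qset \<subseteq> f ` Hbox"
  proof
    fix z assume "z \<in> Qset"
    then obtain k y where z: "z = q (real k) y" by (auto simp: Qset_def)
    have "\<forall>c\<in>C. 0 \<le> frac (mu (real k) y c) \<and> frac (mu (real k) y c) < 1" by (simp add: frac_lt_1)
    note H = this
    have "(\<Sum>c\<in>C. frac (mu (real k) y c) *\<^sub>R (c - v0)) \<in> f ` Hbox"
      by (rule f(4)[THEN spec, THEN mp]) (use H in simp)
    then show "z \<in> f ` Hbox" using z unfolding q_def by simp
  qed
  have bound: "real (card Q0) \<le> M" if "finite Q0" "Q0 \<subseteq> Qset" for Q0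
    using lattice_count[OF f(1,2), of Q0] f(3,5) that sub1 sub2 by auto
  have fin: "finite Qset"
  proof (rule ccontr)
    assume "infinite Qset"
    then obtain Q0 where Q0: "Q0 \<subseteq> Qset" "finite Q0" "card Q0 = nat \<lceil>M\<rceil> + 1"
      using infinite_arbitrarily_large by blast
    then have "real (nat \<lceil>M\<rceil> + 1) \<le> M" using bound by metis
    moreover have "M \<le> real (nat \<lceil>M\<rceil>)" by (simp add: real_nat_ceiling_ge)
    ultimately show False by simp
  qed
  then show ?thesis using bound by blast
qed

lemma reduce:
  "y \<in> sumset k A \<Longrightarrow> \<exists>j r. j < card Qset \<and> r \<in> sumset j A \<and>
      (\<forall>c\<in>C. \<exists>n::nat. mu (real k) y c - mu (real j) r c = real n)"
proof (induction k arbitrary: y rule: less_induct)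
  case (less k)
  show ?case
  proof (cases "k < card Qset")
    case True
    then show ?thesis using less.prems by (intro exI[of _ k] exI[of _ y]) auto
  next
    case False
    define K where "K = card Qset"
    have Kk: "K \<le> k" using False by (simp add: K_def)
    obtain a where a: "\<forall>i<k. a i \<in> A" "y = (\<Sum>i<k. a i)" using sumset_seq[OF less.prems] by blast
    define s where "s m = (\<Sum>i<m. a i)" for m
    have blk: "(\<Sum>i=m..<m+n. a i) \<in> sumset n A" if "m + n \<le> k" for m n
      using that a(1) by (intro sumset_block) auto
    have s_in: "s m \<in> sumset m A" if "m \<le> k" for m
      using blk[of 0 m] that by (simp add: s_def atLeast0LessThan)
    define \<phi> where "\<phi> m = q (real m) (s m)" for m
    have img: "\<phi> ` {0..K} \<subseteq> Qset"
    proof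
      fix z assume "z \<in> \<phi> ` {0..K}"
      then obtain m where m: "m \<le> K" "z = \<phi> m" by auto
      then have "s m \<in> sumset m A" using s_in Kk by simp
      then show "z \<in> Qset" unfolding Qset_def using m \<phi>_def by blast
    qed
    have "\<not> inj_on \<phi> {0..K}"
    proof
      assume "inj_on \<phi> {0..K}"
      then have "card (\<phi> ` {0..K}) = K + 1" by (simp add: card_image)
      moreover have "card (\<phi> ` {0..K}) \<le> card Qset" using img Qset_fin by (intro card_mono) auto
      ultimately show False by (simp add: K_def)
    qed
    then obtain m1 m2 where mm: "m1 \<in> {0..K}" "m2 \<in> {0..K}" "m1 \<noteq> m2" "\<phi> m1 = \<phi> m2"
      unfolding inj_on_def by blast
    then obtain m1 m2 where m: "m1 < m2" "m2 \<le> K" "\<phi> m1 = \<phi> m2"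
      by (metis atLeastAtMost_iff linorder_neqE_nat)
    define \<sigma> where "\<sigma> = (\<Sum>i=m1..<m2. a i)"
    have \<sigma>_in: "\<sigma> \<in> sumset (m2 - m1) A" using blk[of m1 "m2 - m1"] m Kk by (simp add: \<sigma>_def)
    have s2: "s m2 = s m1 + \<sigma>"
      using sum.atLeastLessThan_concat[of 0 m1 m2 a] m by (simp add: s_def \<sigma>_def atLeast0LessThan)
    define y' where "y' = s m1 + (\<Sum>i=m2..<k. a i)"
    define k' where "k' = m1 + (k - m2)"
    have y'_in: "y' \<in> sumset k' A" unfolding y'_def k'_def
      using s_in[of m1] blk[of m2 "k - m2"] m Kk by (intro sumset_add) auto
    have yy: "y = y' + \<sigma>"
    proof -
      have "y = s m2 + (\<Sum>i=m2..<k. a i)"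
        using sum.atLeastLessThan_concat[of 0 m2 k a] m Kk by (simp add: a(2) s_def atLeast0LessThan)
      then show ?thesis using s2 by (simp add: y'_def algebra_simps)
    qed
    have kk: "k = k' + (m2 - m1)" using m Kk by (simp add: k'_def)
    have "k' < k" using m Kk by (simp add: k'_def)
    then obtain j r where jr: "j < card Qset" "r \<in> sumset j A"
      "\<forall>c\<in>C. \<exists>n::nat. mu (real k') y' c - mu (real j) r c = real n"
      using less.IH y'_in by blast
    have "\<exists>n::nat. mu (real k) y c - mu (real j) r c = real n" if c: "c \<in> C" for c
    proof -
      obtain n1 :: nat where n1: "mu (real k') y' c - mu (real j) r c = real n1" using jr(3) c by blast
      have e1: "mu (real k) y c = mu (real k') y' c + mu (real (m2 - m1)) \<sigma> c"
        using mu_add[OF c, of "real k'" "real (m2 - m1)" y' \<sigma>] kk yy by simp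
      have e2: "mu (real m2) (s m2) c = mu (real m1) (s m1) c + mu (real (m2 - m1)) \<sigma> c"
        using mu_add[OF c, of "real m1" "real (m2 - m1)" "s m1" \<sigma>] s2 m by simp
      have "mu (real m2) (s m2) c - mu (real m1) (s m1) c \<in> \<int>"
        using q_eq[of m2 "s m2" m1 "s m1" c] m(3) c by (simp add: \<phi>_def)
      then have "mu (real (m2 - m1)) \<sigma> c \<in> \<int>" using e2 by simp
      moreover have "mu (real (m2 - m1)) \<sigma> c \<ge> 0" using sumset_mu_nonneg[OF AC \<sigma>_in c] .
      ultimately obtain n2 :: nat where "mu (real (m2 - m1)) \<sigma> c = real n2" using nonneg_int_nat by blast
      then have "mu (real k) y c - mu (real j) r c = real (n1 + n2)" using e1 n1 by simp
      then show ?thesis by blast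
    qed
    then show ?thesis using jr(1,2) by blast
  qed
qed

end

lemma Ints_pos_ge1: "(x::real) \<in> \<int> \<Longrightarrow> 0 < x \<Longrightarrow> 1 \<le> x"
  by (metis Ints_cases of_int_0_less_iff of_int_1_le_iff zero_less_imp_eq_int int_one_le_iff_zero_less)

context sset begin

lemma card_C2: "2 \<le> card C" using cardC by simp

lemma other: assumes "c' \<in> C" shows "\<exists>c\<in>C. c \<noteq> c'"
proof (rule ccontr)
  assume "\<not> (\<exists>c\<in>C. c \<noteq> c')"
  then have "C \<subseteq> {c'}" by auto
  then have "card C \<le> 1" using card_mono[of "{c'}" C] by simp
  then show False using card_C2 by simp
qed

lemma main:
  assumes h: "real h \<ge> real (card C) * M - 2 * real (card C)"
    and H: "\<And>c. c \<in> C \<Longrightarrow> \<exists>m. x + real m *\<^sub>R c \<in> sumset (h + m) A"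
  shows "x \<in> sumset h A"
proof -
  define K where "K = card Qset"
  have KM: "real K \<le> M" using Qset_fin by (simp add: K_def)
  have "\<forall>c\<in>C. \<exists>t. t \<in> (UNIV :: (nat \<times> nat \<times> (real^'n)) set) \<and> fst (snd t) < K \<and> snd (snd t) \<in> sumset (fst (snd t)) A \<and>
      (\<forall>c'\<in>C. \<exists>n::nat. mu (real (h + fst t)) (x + real (fst t) *\<^sub>R c) c' - mu (real (fst (snd t))) (snd (snd t)) c' = real n)"
  proof
    fix c assume c: "c \<in> C"
    obtain m where m: "x + real m *\<^sub>R c \<in> sumset (h + m) A" using H[OF c] by blast
    from reduce[OF m] obtain j r where "j < K" "r \<in> sumset j A"
      "\<forall>c'\<in>C. \<exists>n::nat. mu (real (h + m)) (x + real m *\<^sub>R c) c' - mu (real j) r c' = real n"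
      unfolding K_def by blast
    then show "\<exists>t. t \<in> (UNIV :: (nat \<times> nat \<times> (real^'n)) set) \<and> fst (snd t) < K \<and> snd (snd t) \<in> sumset (fst (snd t)) A \<and>
      (\<forall>c'\<in>C. \<exists>n::nat. mu (real (h + fst t)) (x + real (fst t) *\<^sub>R c) c' - mu (real (fst (snd t))) (snd (snd t)) c' = real n)"
      by (intro exI[of _ "(m, j, r)"]) simp
  qed
  then obtain T where T: "\<And>c. c \<in> C \<Longrightarrow> fst (snd (T c)) < K \<and> snd (snd (T c)) \<in> sumset (fst (snd (T c))) A \<and>
      (\<forall>c'\<in>C. \<exists>n::nat. mu (real (h + fst (T c))) (x + real (fst (T c)) *\<^sub>R c) c' - mu (real (fst (snd (T c)))) (snd (snd (T c))) c' = real n)"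
    by metis
  define m where "m c = fst (T c)" for c
  define j where "j c = fst (snd (T c))" for c
  define r where "r c = snd (snd (T c))" for c
  define \<mu> where "\<mu> c' = mu (real h) x c'" for c'
  define \<rho> where "\<rho> c c' = mu (real (j c)) (r c) c'" for c c'
  have jK: "j c < K" if "c \<in> C" for c using T[OF that] by (simp add: j_def)
  have rin: "r c \<in> sumset (j c) A" if "c \<in> C" for c using T[OF that] by (simp add: j_def r_def)
  have shift: "mu (real (h + m c)) (x + real (m c) *\<^sub>R c) c' = \<mu> c' + (if c' = c then real (m c) else 0)"
    if "c \<in> C" "c' \<in> C" for c c'
    using mu_add[OF that(2), of "real h" "real (m c)" x "real (m c) *\<^sub>R c"] mu_scale_vertex[OF that(1) that(2)]
    by (simp add: \<mu>_def)
  have N: "\<exists>n::nat. \<mu> c' + (if c' = c then real (m c) else 0) - \<rho> c c' = real n" if cc: "c \<in> C" "c' \<in> C" for c c'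
  proof -
    from T[OF cc(1)] have "\<forall>c'\<in>C. \<exists>n::nat. mu (real (h + m c)) (x + real (m c) *\<^sub>R c) c' - \<rho> c c' = real n"
      unfolding m_def j_def r_def \<rho>_def by blast
    then obtain n :: nat where "mu (real (h + m c)) (x + real (m c) *\<^sub>R c) c' - \<rho> c c' = real n" using cc(2) by blast
    then show ?thesis using shift[OF cc] by metis
  qed
  have \<rho>0: "\<rho> c c' \<ge> 0" if "c \<in> C" "c' \<in> C" for c c'
    using sumset_mu_nonneg[OF AC rin[OF that(1)] that(2)] by (simp add: \<rho>_def)
  show ?thesis
  proof (cases "\<exists>c\<in>C. \<rho> c c \<le> \<mu> c")
    case True
    then obtain c where c: "c \<in> C" "\<rho> c c \<le> \<mu> c" by blast
    have "\<exists>n::nat. mu (real h) x c' - mu (real (j c)) (r c) c' = real n" if c': "c' \<in> C" for c'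
    proof (cases "c' = c")
      case True
      obtain n :: nat where n: "\<mu> c + real (m c) - \<rho> c c = real n" using N[OF c(1) c(1)] by auto
      have "\<mu> c - \<rho> c c = real n - real (m c)" using n by simp
      then have "\<mu> c - \<rho> c c \<in> \<int>" by simp
      then show ?thesis using True c nonneg_int_nat by (simp add: \<mu>_def \<rho>_def)
    next
      case False
      then show ?thesis using N[OF c(1) c'] by (simp add: \<mu>_def \<rho>_def)
    qed
    then obtain n where "\<forall>c'\<in>C. mu (real h) x c' - mu (real (j c)) (r c) c' = real (n c')" by metis
    then show ?thesis using comp[OF CA rin[OF c(1)]] by blast
  next
    case False
    then have gt: "\<mu> c < \<rho> c c" if "c \<in> C" for c using that by force
    have ge1: "\<mu> c + 1 \<le> \<rho> c c" if c: "c \<in> C" for c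
    proof -
      obtain n :: nat where n: "\<mu> c + real (m c) - \<rho> c c = real n" using N[OF c c] by auto
      have "\<rho> c c - \<mu> c = real (m c) - real n" using n by simp
      then have "\<rho> c c - \<mu> c \<in> \<int>" by simp
      then have "1 \<le> \<rho> c c - \<mu> c" using gt[OF c] Ints_pos_ge1 by simp
      then show ?thesis by simp
    qed
    show ?thesis
    proof (cases "\<forall>c\<in>C. \<mu> c \<in> \<int>")
      case True
      have "\<exists>n::nat. mu (real h) x c' - mu (real 0) 0 c' = real n" if c': "c' \<in> C" for c'
      proof -
        obtain c where c: "c \<in> C" "c \<noteq> c'"
          using other[OF c'] by blast
        obtain n :: nat where "\<mu> c' - \<rho> c c' = real n" using N[OF c(1) c'] c(2) by auto
        then have "\<mu> c' \<ge> 0" using \<rho>0[OF c(1) c'] by linarith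
        then show ?thesis using True c' nonneg_int_nat mu_zero[OF c'] by (simp add: \<mu>_def)
      qed
      then obtain n where "\<forall>c'\<in>C. mu (real h) x c' - mu (real 0) 0 c' = real (n c')" by metis
      moreover have "(0::real^'n) \<in> sumset 0 A" by simp
      ultimately show ?thesis using comp[OF CA] by blast
    next
      case False
      then obtain c0 where c0: "c0 \<in> C" "\<mu> c0 \<notin> \<int>" by blast
      obtain c1 where c1: "c1 \<in> C" "c1 \<noteq> c0"
        using other[OF c0(1)] by blast
      obtain n :: nat where n: "\<mu> c0 - \<rho> c1 c0 = real n" using N[OF c1(1) c0(1)] c1(2) by auto
      have "\<rho> c1 c0 \<noteq> 0" using n c0(2) by (metis Ints_of_nat diff_zero)
      then have pos: "\<rho> c1 c0 > 0" using \<rho>0[OF c1(1) c0(1)] by simp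
      have rowsum: "sum (\<rho> c) C = real (j c)" if "c \<in> C" for c using mu(1) by (simp add: \<rho>_def)
      have row_ge: "sum (\<rho> c) C \<ge> \<rho> c c + (if c = c1 then \<rho> c1 c0 else 0)" if c: "c \<in> C" for c
      proof (cases "c = c1")
        case True
        have "sum (\<rho> c) {c1, c0} \<le> sum (\<rho> c) C"
          using c0 c1 finC \<rho>0[OF c] by (intro sum_mono2) auto
        then show ?thesis using True c1 by simp
      next
        case False
        then show ?thesis using member_le_sum[of c C "\<rho> c"] \<rho>0[OF c] finC c by simp
      qed
      have "real h + real (card C) = (\<Sum>c\<in>C. \<mu> c + 1)"
        using mu(1)[of "real h" x] by (simp add: sum.distrib \<mu>_def)
      also have "\<dots> \<le> (\<Sum>c\<in>C. \<rho> c c)" using ge1 by (intro sum_mono) auto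
      also have "\<dots> < (\<Sum>c\<in>C. \<rho> c c + (if c = c1 then \<rho> c1 c0 else 0))"
        using pos c1 finC by (simp add: sum.distrib)
      also have "\<dots> \<le> (\<Sum>c\<in>C. sum (\<rho> c) C)" using row_ge by (intro sum_mono) auto
      also have "\<dots> = (\<Sum>c\<in>C. real (j c))" using rowsum by simp
      also have "\<dots> \<le> (\<Sum>c\<in>C. M - 1)"
      proof (intro sum_mono)
        fix c assume "c \<in> C"
        then have "real (j c) + 1 \<le> real K" using jK by (metis Suc_leI of_nat_Suc of_nat_le_iff add.commute)
        then show "real (j c) \<le> M - 1" using KM by simp
      qed
      also have "\<dots> = real (card C) * M - real (card C)" by (simp add: algebra_simps)
      finally show ?thesis using h by simp
    qed
  qed
qed

end

theorem theorem1p3: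
  fixes A :: "(real ^ 'n) set" and h :: nat
  assumes "finite A"
    and "A \<subseteq> int_lattice"
    and "int_span {a - b | a b. a \<in> A \<and> b \<in> A} = int_lattice"
    and "int CARD('n) simplex (convex hull A)"
    and "real h \<ge> measure lebesgue (convex hull A) * fact (CARD('n) + 1) - 2 - 2 * real CARD('n)"
  shows "sumset h A =
    (\<Inter>v\<in>{v. v extreme_point_of (convex hull A)}.
        (\<lambda>t. real h *\<^sub>R v + t) ` T_cone A v)"
proof -
  obtain C where C: "\<not> affine_dependent C" "int (card C) = int CARD('n) + 1" "convex hull A = convex hull C"
    using assms(4) unfolding simplex_def by blast
  have finC: "finite C" using C(1) by (rule aff_independent_finite)
  have cardC: "card C = Suc CARD('n)" using C(2) by simp
  have ext: "{v. v extreme_point_of (convex hull A)} = C"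
    using extreme_point_of_convex_hull_affine_independent[OF C(1)] C(3) by auto
  have CA: "C \<subseteq> A" using extreme_point_of_convex_hull ext by blast
  have AC: "A \<subseteq> convex hull C" using C(3) hull_subset[of A convex] by simp
  obtain v0 where v0: "v0 \<in> C" using cardC by (metis card.empty ex_in_conv nat.distinct(1))
  interpret sset C v0 A
    by unfold_locales (use finC C(1) cardC v0 CA AC assms(2) in auto)
  have bound: "real h \<ge> real (card C) * M - 2 * real (card C)"
  proof -
    have "measure lebesgue (convex hull A) * fact (CARD('n) + 1) = real (card C) * M"
      using cardC C(3) by (simp add: M_def algebra_simps)
    then show ?thesis using assms(5) cardC by (simp add: algebra_simps)
  qed
  show ?thesis unfolding ext
  proof
    show "sumset h A \<subseteq> (\<Inter>v\<in>C. (\<lambda>t. real h *\<^sub>R v + t) ` T_cone A v)"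
    proof
      fix x assume x: "x \<in> sumset h A"
      show "x \<in> (\<Inter>v\<in>C. (\<lambda>t. real h *\<^sub>R v + t) ` T_cone A v)"
      proof
        fix v assume "v \<in> C"
        have "(x - real h *\<^sub>R v) + real h *\<^sub>R v \<in> sumset h A" using x by simp
        then have "x - real h *\<^sub>R v \<in> sumset h ((\<lambda>a. a - v) ` A)" using sumset_shift by blast
        then have "x - real h *\<^sub>R v \<in> T_cone A v" unfolding T_cone_def by blast
        then show "x \<in> (\<lambda>t. real h *\<^sub>R v + t) ` T_cone A v" by (intro image_eqI[of _ _ "x - real h *\<^sub>R v"]) auto
      qed
    qed
  next
    show "(\<Inter>v\<in>C. (\<lambda>t. real h *\<^sub>R v + t) ` T_cone A v) \<subseteq> sumset h A"
    proof
      fix x assume x: "x \<in> (\<Inter>v\<in>C. (\<lambda>t. real h *\<^sub>R v + t) ` T_cone A v)"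
      have H: "\<exists>m. x + real m *\<^sub>R c \<in> sumset (h + m) A" if c: "c \<in> C" for c
      proof -
        obtain t where t: "x = real h *\<^sub>R c + t" "t \<in> T_cone A c" using x c by blast
        then obtain k where k: "t \<in> sumset k ((\<lambda>a. a - c) ` A)" unfolding T_cone_def by blast
        then have tk: "t + real k *\<^sub>R c \<in> sumset k A" using sumset_shift by blast
        show ?thesis
        proof (cases "h \<le> k")
          case True
          have "x + real (k - h) *\<^sub>R c = t + real k *\<^sub>R c"
            using True t(1) by (simp add: algebra_simps of_nat_diff scaleR_diff_left)
          then show ?thesis using tk True by (intro exI[of _ "k - h"]) simp
        next
          case False
          have "(t + real k *\<^sub>R c) + real (h - k) *\<^sub>R c \<in> sumset (k + (h - k)) A"
            using tk c CA by (intro sumset_add sumset_scale) auto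
          moreover have "(t + real k *\<^sub>R c) + real (h - k) *\<^sub>R c = x + real 0 *\<^sub>R c"
            using False t(1) by (simp add: algebra_simps of_nat_diff scaleR_diff_left)
          ultimately show ?thesis using False by (intro exI[of _ 0]) simp
        qed
      qed
      show "x \<in> sumset h A" using main[OF bound H] by blast
    qed
  qed
qed

end
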